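(* Assume the setting and Assumptions A1, A2 described in the context, and assume $\Phi^*:=\inf_v\Phi(v)>-\infty$. Let $v_1\in\mathbb{R}^{d_1}$, let $\widehat\nabla\Phi(v_1),\widehat\nabla\Phi(v_2),\dots\in\mathbb{R}^{d_1}$ be arbitrary vectors (hypergradient estimates), and define $v_{k+1}=v_k-\alpha\widehat\nabla\Phi(v_k)$ with $\alpha=\frac{1}{4L_v}$, where $$L_v:=\bar L_{f_v}+\frac{L}{\mu}\big(L_{f_v}+\bar L_{f_\theta}\big)+\frac{L^2}{\mu^2}L_{f_\theta}+D_1\Big(\frac{\bar L_{\ell_{\theta,v}}}{\mu}+\frac{L}{\mu^2}\big(\bar L_{\ell_{\theta,\theta}}+L_{\ell_{\theta,v}}\big)+\frac{L^2L_{\ell_{\theta,\theta}}}{\mu^3}\Big).$$ Then for every $K\ge1$, $$\frac{1}{16L_v}\sum_{k=1}^K\|\nabla\Phi(v_k)\|^2\le\Phi(v_1)-\Phi^*+\frac{3}{16L_v}\sum_{k=1}^K\|\nabla\Phi(v_k)-\widehat\nabla\Phi(v_k)\|^2.$$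
   Context: Let $d_1,d_2\ge1$, $R>0$, $\Theta=\{\theta\in\mathbb{R}^{d_2}:\|\theta\|\le R\}$; norms are Euclidean. Let $q$ be a probability distribution on a sample space and $\{p(\cdot;v,\theta)\}$ a family of probability densities indexed by $(v,\theta)\in\mathbb{R}^{d_1}\times\mathbb{R}^{d_2}$. Put $l(v,\theta,\xi):=-\log p(\xi;v,\theta)$, $\ell(v,\theta):=\mathbb{E}_{\xi\sim q}[l(v,\theta,\xi)]$, $\theta^*(v):=\arg\min_{\theta\in\Theta}\ell(v,\theta)$. Let $f:\mathbb{R}^{d_1}\times\mathbb{R}^{d_2}\to\mathbb{R}$ be differentiable and $\Phi(v):=f(v,\theta^*(v))$, with gradient $\nabla\Phi(v)=\nabla_vf(v,\theta^*(v))-(\nabla^2_{\theta,v}\ell(v,\theta^*(v)))^\top(\nabla^2_{\theta,\theta}\ell(v,\theta^*(v)))^{-1}\nabla_\theta f(v,\theta^*(v))$. A1: (i) there are $\mu,L>0$ such that for every $\xi$, $\theta\mapsto l(v,\theta,\xi)$ is $\mu$-strongly convex, $l(\cdot,\cdot,\xi)$ is twice continuously differentiable, and its gradient in $(v,\theta)$ is $L$-Lipschitz jointly, uniformly in $\xi$; (ii) for each $v$, $\theta\mapsto\nabla^2_{\theta,v}\ell(v,\theta)$, $\theta\mapsto\nabla^2_{\theta,\theta}\ell(v,\theta)$ are $L_{\ell_{\theta,v}}$-, $L_{\ell_{\theta,\theta}}$-Lipschitz; for each $\theta$, $v\mapsto\nabla^2_{\theta,v}\ell(v,\theta)$, $v\mapsto\nabla^2_{\theta,\theta}\ell(v,\theta)$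 are $\bar L_{\ell_{\theta,v}}$-, $\bar L_{\ell_{\theta,\theta}}$-Lipschitz. A2: (i) for each $v$, $\theta\mapsto\nabla_vf(v,\theta)$ is $L_{f_v}$-Lipschitz and $\theta\mapsto\nabla_\theta f(v,\theta)$ is $L_{f_\theta}$-Lipschitz; for each $\theta$, $v\mapsto\nabla_vf(v,\theta)$ is $\bar L_{f_v}$-Lipschitz and $v\mapsto\nabla_\theta f(v,\theta)$ is $\bar L_{f_\theta}$-Lipschitz; (ii) $\|\nabla_\theta f(v,\theta)\|\le D_1$ for all $v,\theta$. *)

theory Defs
  imports "HOL-Probability.Probability"
begin

definition strongly_convex_on :: "real \<Rightarrow> ('a::real_normed_vector) set \<Rightarrow> ('a \<Rightarrow> real) \<Rightarrow> bool" where
  "strongly_convex_on mu S g \<longleftrightarrow> convex S \<and>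
     (\<forall>x\<in>S. \<forall>y\<in>S. \<forall>t::real. 0 \<le> t \<and> t \<le> 1 \<longrightarrow>
        g (t *\<^sub>R x + (1 - t) *\<^sub>R y) \<le> t * g x + (1 - t) * g y - mu / 2 * t * (1 - t) * (norm (x - y))\<^sup>2)"

definition lfun :: "('s \<Rightarrow> 'v \<Rightarrow> 't \<Rightarrow> real) \<Rightarrow> 'v \<Rightarrow> 't \<Rightarrow> 's \<Rightarrow> real" where
  "lfun p v \<theta> \<xi> = - ln (p \<xi> v \<theta>)"

definition ell :: "'s measure \<Rightarrow> ('s \<Rightarrow> 'v \<Rightarrow> 't \<Rightarrow> real) \<Rightarrow> 'v \<Rightarrow> 't \<Rightarrow> real" where
  "ell q p v \<theta> = (\<integral>\<xi>. lfun p v \<theta> \<xi> \<partial>q)"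

definition theta_star :: "('v \<Rightarrow> 't::real_normed_vector \<Rightarrow> real) \<Rightarrow> real \<Rightarrow> 'v \<Rightarrow> 't" where
  "theta_star ellf R v = (THE \<theta>. \<theta> \<in> cball 0 R \<and> (\<forall>\<theta>'\<in>cball 0 R. ellf v \<theta> \<le> ellf v \<theta>'))"

text \<open>H_{theta v}(v,theta) is the derivative of v |-> grad_theta ell(v,theta),
  H_{theta theta}(v,theta) that of theta |-> grad_theta ell(v,theta); transpose = adjoint.\<close>
definition hypergrad ::
  "('v::euclidean_space \<Rightarrow> 't::euclidean_space \<Rightarrow> 'v) \<Rightarrow> ('v \<Rightarrow> 't \<Rightarrow> 't)
   \<Rightarrow> ('v \<Rightarrow> 't \<Rightarrow> ('v \<Rightarrow>\<^sub>L 't)) \<Rightarrow> ('v \<Rightarrow> 't \<Rightarrow> ('t \<Rightarrow>\<^sub>L 't)) \<Rightarrow> ('v \<Rightarrow> 't) \<Rightarrow> 'v \<Rightarrow> 'v" where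
  "hypergrad fv ft Htv Htt ts v =
     fv v (ts v) - adjoint (blinfun_apply (Htv v (ts v))) (inv (blinfun_apply (Htt v (ts v))) (ft v (ts v)))"

definition Lv_const :: "real \<Rightarrow> real \<Rightarrow> real \<Rightarrow> real \<Rightarrow> real \<Rightarrow> real \<Rightarrow> real \<Rightarrow> real \<Rightarrow> real \<Rightarrow> real \<Rightarrow> real \<Rightarrow> real" where
  "Lv_const L \<mu> Lfv Lft Lbfv Lbft D1 Llv Llt Lblv Lblt =
     Lbfv + L / \<mu> * (Lfv + Lbft) + L\<^sup>2 / \<mu>\<^sup>2 * Lft
     + D1 * (Lblv / \<mu> + L / \<mu>\<^sup>2 * (Lblt + Llv) + L\<^sup>2 * Llt / \<mu>^3)"

end

theory Submission
  imports Defs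
begin


lemma dirderiv:
  fixes F :: "'a::real_normed_vector \<Rightarrow> 'b::real_normed_vector"
  assumes "(F has_derivative F') (at x)"
  shows "((\<lambda>t. (1/t) *\<^sub>R (F (x + t *\<^sub>R h) - F x)) \<longlongrightarrow> F' h) (at_right 0)"
proof -
  have lin: "linear F'" using assms has_derivative_linear by blast
  have g: "((\<lambda>t::real. x + t *\<^sub>R h) has_derivative (\<lambda>t. t *\<^sub>R h)) (at 0)"
    by (auto intro!: derivative_eq_intros)
  have d: "((\<lambda>t. F (x + t *\<^sub>R h)) has_derivative (\<lambda>t. t *\<^sub>R F' h)) (at 0)"
    using has_derivative_compose[OF g, of F F'] assms lin
    by (simp add: o_def linear_scale)
  then have "((\<lambda>t::real. norm ((F (x + t*\<^sub>R h) - F (x + 0 *\<^sub>R h)) - (t - 0) *\<^sub>R F' h) / norm (t - 0)) \<longlongrightarrow> 0) (at 0)"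
    unfolding has_derivative_iff_norm by simp
  then have l: "((\<lambda>t::real. norm ((F (x + t*\<^sub>R h) - F x) - t *\<^sub>R F' h) / norm t) \<longlongrightarrow> 0) (at_right 0)"
    by (simp add: filterlim_at_split)
  have "((\<lambda>t. norm ((1/t) *\<^sub>R (F (x + t *\<^sub>R h) - F x) - F' h)) \<longlongrightarrow> 0) (at_right 0)"
  proof (rule Lim_transform_eventually[OF l])
    show "\<forall>\<^sub>F t in at_right 0. norm ((F (x + t*\<^sub>R h) - F x) - t *\<^sub>R F' h) / norm t
       = norm ((1/t) *\<^sub>R (F (x + t *\<^sub>R h) - F x) - F' h)"
      using eventually_at_right_less[of "0::real"]
    proof (rule eventually_mono)
      fix t :: real assume t: "0 < t"
      have "(1/t) *\<^sub>R (F (x + t *\<^sub>R h) - F x) - F' h = (1/t) *\<^sub>R ((F (x + t*\<^sub>R h) - F x) - t *\<^sub>R F' h)"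
        using t by (simp add: algebra_simps)
      then show "norm ((F (x + t*\<^sub>R h) - F x) - t *\<^sub>R F' h) / norm t
       = norm ((1/t) *\<^sub>R (F (x + t *\<^sub>R h) - F x) - F' h)" using t by simp
    qed
  qed
  then have "((\<lambda>t. (1/t) *\<^sub>R (F (x + t *\<^sub>R h) - F x) - F' h) \<longlongrightarrow> 0) (at_right 0)"
    by (rule tendsto_norm_zero_cancel)
  then show ?thesis by (subst Lim_null)
qed

lemma ev_01: "\<forall>\<^sub>F t in at_right (0::real). 0 < t \<and> t < 1"
  unfolding eventually_at_right_field by (intro exI[of _ 1]) auto

lemma sc_first_order:
  fixes f :: "'a::real_inner \<Rightarrow> real"
  assumes sc: "strongly_convex_on \<mu> UNIV f" and d: "(f has_derivative (\<lambda>h. inner g h)) (at x)"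
  shows "f y \<ge> f x + inner g (y - x) + \<mu>/2 * (norm (y-x))^2"
proof -
  let ?d = "y - x"
  have lim1: "((\<lambda>t. (1/t) *\<^sub>R (f (x + t *\<^sub>R ?d) - f x)) \<longlongrightarrow> inner g ?d) (at_right 0)"
    using dirderiv[OF d] by simp
  have lim2: "((\<lambda>t. f y - f x - \<mu>/2*(1-t)*(norm ?d)^2) \<longlongrightarrow> f y - f x - \<mu>/2*(1-0)*(norm ?d)^2) (at_right 0)"
    by (intro tendsto_intros)
  have ev: "\<forall>\<^sub>F t in at_right 0. (1/t) *\<^sub>R (f (x + t *\<^sub>R ?d) - f x) \<le> f y - f x - \<mu>/2*(1-t)*(norm ?d)^2"
    using ev_01
  proof (rule eventually_mono)
    fix t :: real assume t: "0 < t \<and> t < 1"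
    have "f (t *\<^sub>R y + (1 - t) *\<^sub>R x) \<le> t * f y + (1 - t) * f x - \<mu> / 2 * t * (1 - t) * (norm (y - x))\<^sup>2"
      using sc t unfolding strongly_convex_on_def by auto
    moreover have "t *\<^sub>R y + (1 - t) *\<^sub>R x = x + t *\<^sub>R ?d" by (simp add: algebra_simps)
    ultimately have "f (x + t *\<^sub>R ?d) - f x \<le> t * (f y - f x - \<mu>/2*(1-t)*(norm ?d)^2)"
      by (simp add: algebra_simps)
    then show "(1/t) *\<^sub>R (f (x + t *\<^sub>R ?d) - f x) \<le> f y - f x - \<mu>/2*(1-t)*(norm ?d)^2"
      using t by (simp add: field_simps)
  qed
  have "inner g ?d \<le> f y - f x - \<mu>/2*(1-0)*(norm ?d)^2"
    by (rule tendsto_le[OF _ lim2 lim1 ev]) simp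
  then show ?thesis by simp
qed

lemma sc_grad_mono:
  fixes f :: "'a::real_inner \<Rightarrow> real"
  assumes sc: "strongly_convex_on \<mu> UNIV f" and d: "\<And>x. (f has_derivative (\<lambda>h. inner (G x) h)) (at x)"
  shows "inner (G y - G x) (y - x) \<ge> \<mu> * (norm (y-x))^2"
proof -
  have 1: "f y \<ge> f x + inner (G x) (y - x) + \<mu>/2 * (norm (y-x))^2" by (rule sc_first_order[OF sc d])
  have 2: "f x \<ge> f y + inner (G y) (x - y) + \<mu>/2 * (norm (x-y))^2" by (rule sc_first_order[OF sc d])
  have "norm (x - y) = norm (y - x)" by (rule norm_minus_commute)
  moreover have "inner (G y) (x - y) = - inner (G y) (y - x)" by (simp add: inner_diff_right)
  ultimately show ?thesis using 1 2 by (simp add: inner_diff_left)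
qed

lemma hess_lower:
  fixes G :: "'a::real_inner \<Rightarrow> 'a"
  assumes d: "(G has_derivative B) (at x)" and mono: "\<And>y. inner (G y - G x) (y - x) \<ge> \<mu> * (norm (y-x))^2"
  shows "inner (B k) k \<ge> \<mu> * (norm k)^2"
proof -
  have lim: "((\<lambda>t. inner ((1/t) *\<^sub>R (G (x + t *\<^sub>R k) - G x)) k) \<longlongrightarrow> inner (B k) k) (at_right 0)"
    by (intro tendsto_intros dirderiv[OF d])
  have ev: "\<forall>\<^sub>F t in at_right 0. \<mu> * (norm k)^2 \<le> inner ((1/t) *\<^sub>R (G (x + t *\<^sub>R k) - G x)) k"
    using eventually_at_right_less[of "0::real"]
  proof (rule eventually_mono)
    fix t :: real assume t: "0 < t"
    have m: "inner (G (x + t *\<^sub>R k) - G x) (t *\<^sub>R k) \<ge> \<mu> * (norm (t *\<^sub>R k))^2"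
      using mono[of "x + t *\<^sub>R k"] by simp
    have gen: "inner ((1/t) *\<^sub>R v) k = inner v (t *\<^sub>R k) / t^2" for v
      using t by (simp add: power2_eq_square)
    have "inner ((1/t) *\<^sub>R (G (x + t *\<^sub>R k) - G x)) k = inner (G (x + t *\<^sub>R k) - G x) (t *\<^sub>R k) / t^2"
      by (rule gen)
    moreover have "\<mu> * (norm (t *\<^sub>R k))^2 / t^2 = \<mu> * (norm k)^2" using t by (simp add: power_mult_distrib)
    ultimately show "\<mu> * (norm k)^2 \<le> inner ((1/t) *\<^sub>R (G (x + t *\<^sub>R k) - G x)) k"
      using m t by (metis divide_right_mono zero_le_power2)
  qed
  show ?thesis by (rule tendsto_le[OF _ lim tendsto_const ev]) simp
qed

lemma lip_deriv_bound:
  fixes F :: "'a::real_normed_vector \<Rightarrow> 'b::real_normed_vector"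
  assumes lip: "C-lipschitz_on UNIV F" and d: "(F has_derivative F') (at x)"
  shows "norm (F' h) \<le> C * norm h"
proof -
  have lim: "((\<lambda>t. norm ((1/t) *\<^sub>R (F (x + t *\<^sub>R h) - F x))) \<longlongrightarrow> norm (F' h)) (at_right 0)"
    by (intro tendsto_intros dirderiv[OF d])
  have ev: "\<forall>\<^sub>F t in at_right 0. norm ((1/t) *\<^sub>R (F (x + t *\<^sub>R h) - F x)) \<le> C * norm h"
    using eventually_at_right_less[of "0::real"]
  proof (rule eventually_mono)
    fix t :: real assume t: "0 < t"
    have "dist (F (x + t *\<^sub>R h)) (F x) \<le> C * dist (x + t *\<^sub>R h) x"
      using lip unfolding lipschitz_on_def by blast
    then have "norm (F (x + t *\<^sub>R h) - F x) \<le> C * (t * norm h)" using t by (simp add: dist_norm)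
    moreover have gen: "norm ((1/t) *\<^sub>R v) = norm v / t" for v :: 'b
      using t by simp
    ultimately show "norm ((1/t) *\<^sub>R (F (x + t *\<^sub>R h) - F x)) \<le> C * norm h"
      using t by (simp only: gen) (simp add: field_simps)
  qed
  show ?thesis by (rule tendsto_le[OF _ tendsto_const lim ev]) simp
qed

lemma coercive_inv:
  fixes B :: "'a::euclidean_space \<Rightarrow> 'a"
  assumes lin: "linear B" and pos: "\<And>k. inner (B k) k \<ge> \<mu> * (norm k)^2" and mu: "\<mu> > 0"
  shows "B (inv B w) = w" and "norm (inv B w) \<le> norm w / \<mu>"
proof -
  have inj: "inj B"
  proof (rule linear_injective_0[OF lin, THEN iffD2], intro allI impI)
    fix k assume "B k = 0"
    then have "\<mu> * (norm k)^2 \<le> 0" using pos[of k] by simp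
    then show "k = 0" using mu by (simp add: mult_le_0_iff)
  qed
  have "surj B" using linear_inj_imp_surj[OF lin inj] .
  then show 1: "B (inv B w) = w" by (simp add: surj_f_inv_f)
  let ?k = "inv B w"
  have "\<mu> * (norm ?k)^2 \<le> inner w ?k" using pos[of ?k] 1 by simp
  also have "\<dots> \<le> norm w * norm ?k" by (rule norm_cauchy_schwarz)
  finally have a: "\<mu> * (norm ?k)^2 \<le> norm w * norm ?k" .
  show "norm ?k \<le> norm w / \<mu>"
  proof (cases "norm ?k = 0")
    case True then show ?thesis using mu by simp
  next
    case False
    then have "norm ?k > 0" by simp
    with a have "\<mu> * norm ?k \<le> norm w" by (simp add: power2_eq_square)
    then show ?thesis using mu by (simp add: field_simps)
  qed
qed

lemma adjoint_norm:
  fixes A :: "'a::euclidean_space \<Rightarrow>\<^sub>L 'b::euclidean_space"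
  shows "norm (adjoint (blinfun_apply A) y) \<le> norm A * norm y"
proof -
  let ?z = "adjoint (blinfun_apply A) y"
  have lin: "linear (blinfun_apply A)" by (simp add: blinfun.bounded_linear_right bounded_linear.linear)
  have "(norm ?z)^2 = inner ?z ?z" by (simp add: power2_norm_eq_inner)
  also have "\<dots> = inner (blinfun_apply A ?z) y" by (rule adjoint_works[OF lin])
  also have "\<dots> \<le> norm (blinfun_apply A ?z) * norm y" by (rule norm_cauchy_schwarz)
  also have "\<dots> \<le> norm A * norm ?z * norm y" by (intro mult_right_mono norm_blinfun) simp
  finally have a: "(norm ?z)^2 \<le> norm A * norm ?z * norm y" .
  show ?thesis
  proof (cases "norm ?z = 0")
    case True then show ?thesis by simp
  next
    case False
    then have "norm ?z > 0" by simp
    with a show ?thesis by (simp add: power2_eq_square algebra_simps)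
  qed
qed

lemma descent:
  fixes \<Phi> :: "'a::real_inner \<Rightarrow> real"
  assumes d: "\<And>v. (\<Phi> has_derivative (\<lambda>h. inner (G v) h)) (at v)" and lip: "M-lipschitz_on UNIV G"
  shows "\<Phi> y \<le> \<Phi> x + inner (G x) (y - x) + M/2 * (norm (y-x))^2"
proof -
  let ?d = "y - x"
  define \<psi> where "\<psi> t = \<Phi> (x + t *\<^sub>R ?d) - t * inner (G x) ?d - M/2 * t^2 * (norm ?d)^2" for t
  have der: "DERIV \<psi> t :> (inner (G (x + t *\<^sub>R ?d)) ?d - inner (G x) ?d - M * t * (norm ?d)^2)" for t
  proof -
    have g: "((\<lambda>t::real. x + t *\<^sub>R ?d) has_derivative (\<lambda>t. t *\<^sub>R ?d)) (at t)"
      by (auto intro!: derivative_eq_intros)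
    have "((\<lambda>t. \<Phi> (x + t *\<^sub>R ?d)) has_derivative (\<lambda>s. inner (G (x + t *\<^sub>R ?d)) (s *\<^sub>R ?d))) (at t)"
      using has_derivative_compose[OF g d] by (simp add: o_def)
    then have "DERIV (\<lambda>t. \<Phi> (x + t *\<^sub>R ?d)) t :> inner (G (x + t *\<^sub>R ?d)) ?d"
      by (rule has_derivative_imp_has_field_derivative) simp
    then show ?thesis unfolding \<psi>_def
      by (auto intro!: derivative_eq_intros simp: power2_eq_square algebra_simps)
  qed
  obtain z where z: "0 < z" "z < 1" and eq: "\<psi> 1 - \<psi> 0 = (1 - 0) * (inner (G (x + z *\<^sub>R ?d)) ?d - inner (G x) ?d - M * z * (norm ?d)^2)"
    using MVT2[of 0 1 \<psi>, OF _ der] by auto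
  have "inner (G (x + z *\<^sub>R ?d)) ?d - inner (G x) ?d = inner (G (x + z *\<^sub>R ?d) - G x) ?d"
    by (simp add: inner_diff_left)
  also have "\<dots> \<le> norm (G (x + z *\<^sub>R ?d) - G x) * norm ?d" by (rule norm_cauchy_schwarz)
  also have "\<dots> \<le> (M * (z * norm ?d)) * norm ?d"
  proof (rule mult_right_mono)
    have "dist (G (x + z *\<^sub>R ?d)) (G x) \<le> M * dist (x + z *\<^sub>R ?d) x"
      using lip unfolding lipschitz_on_def by blast
    then show "norm (G (x + z *\<^sub>R ?d) - G x) \<le> M * (z * norm ?d)" using z by (simp add: dist_norm)
  qed simp
  finally have "\<psi> 1 - \<psi> 0 \<le> 0" using eq by (simp add: power2_eq_square algebra_simps)
  then show ?thesis unfolding \<psi>_def by simp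
qed


lemma eventually_01_left: "\<forall>\<^sub>F t in at_left (1::real). 0 < t \<and> t < 1"
  unfolding eventually_at_left_field by (intro exI[of _ 0]) auto

lemma qgrowth:
  fixes f :: "'a::real_normed_vector \<Rightarrow> real"
  assumes sc: "strongly_convex_on \<mu> UNIV f" and C: "convex C" and aC: "a \<in> C"
    and amin: "\<And>y. y \<in> C \<Longrightarrow> f a \<le> f y" and xC: "x \<in> C"
  shows "f x - f a \<ge> \<mu>/2 * (norm (x - a))^2"
proof -
  let ?D = "(norm (x - a))^2"
  have ev: "\<forall>\<^sub>F t in at_left 1. \<mu>/2 * t * ?D \<le> f x - f a"
    using eventually_01_left
  proof (rule eventually_mono)
    fix t :: real assume t: "0 < t \<and> t < 1"
    have yC: "t *\<^sub>R a + (1 - t) *\<^sub>R x \<in> C"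
      using C aC xC t unfolding convex_def by auto
    have "f a \<le> f (t *\<^sub>R a + (1 - t) *\<^sub>R x)" using amin yC by blast
    also have "\<dots> \<le> t * f a + (1 - t) * f x - \<mu> / 2 * t * (1 - t) * (norm (a - x))\<^sup>2"
      using sc t unfolding strongly_convex_on_def by auto
    finally have "(1 - t) * (\<mu> / 2 * t * ?D) \<le> (1 - t) * (f x - f a)"
      by (simp add: norm_minus_commute algebra_simps)
    then show "\<mu>/2 * t * ?D \<le> f x - f a" using t by simp
  qed
  have lim: "((\<lambda>t. \<mu>/2 * t * ?D) \<longlongrightarrow> \<mu>/2 * 1 * ?D) (at_left 1)"
    by (intro tendsto_intros)
  have "\<mu>/2 * 1 * ?D \<le> f x - f a"
    by (rule tendsto_le[OF _ tendsto_const lim ev]) simp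
  then show ?thesis by simp
qed

lemma ell_sc:
  fixes p :: "'s \<Rightarrow> 'v \<Rightarrow> 't::real_normed_vector \<Rightarrow> real"
  assumes q: "prob_space q" and l_int: "\<And>v \<theta>. integrable q (lfun p v \<theta>)"
   and sc: "\<And>\<xi> v. \<xi> \<in> space q \<Longrightarrow> strongly_convex_on \<mu> UNIV (\<lambda>\<theta>. lfun p v \<theta> \<xi>)"
  shows "strongly_convex_on \<mu> UNIV (ell q p v)"
  unfolding strongly_convex_on_def
proof (intro conjI ballI allI impI)
  show "convex (UNIV :: 't set)" by simp
  fix x y :: 't and t :: real assume t: "0 \<le> t \<and> t \<le> 1"
  interpret prob_space q by (rule q)
  define c where "c = \<mu> / 2 * t * (1 - t) * (norm (x - y))\<^sup>2"
  have i1: "integrable q (\<lambda>\<xi>. t * lfun p v x \<xi> + (1-t) * lfun p v y \<xi>)"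
    using l_int by auto
  have "ell q p v (t *\<^sub>R x + (1-t) *\<^sub>R y) = (\<integral>\<xi>. lfun p v (t *\<^sub>R x + (1-t) *\<^sub>R y) \<xi> \<partial>q)"
    by (simp add: ell_def)
  also have "\<dots> \<le> (\<integral>\<xi>. (t * lfun p v x \<xi> + (1-t) * lfun p v y \<xi>) - c \<partial>q)"
  proof (rule integral_mono)
    show "integrable q (lfun p v (t *\<^sub>R x + (1-t) *\<^sub>R y))" by (rule l_int)
    show "integrable q (\<lambda>\<xi>. (t * lfun p v x \<xi> + (1-t) * lfun p v y \<xi>) - c)"
      using i1 by auto
    fix \<xi> assume "\<xi> \<in> space q"
    then show "lfun p v (t *\<^sub>R x + (1-t) *\<^sub>R y) \<xi> \<le> (t * lfun p v x \<xi> + (1-t) * lfun p v y \<xi>) - c"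
      using sc[of \<xi> v] t unfolding strongly_convex_on_def c_def by auto
  qed
  also have "\<dots> = (\<integral>\<xi>. t * lfun p v x \<xi> + (1-t) * lfun p v y \<xi> \<partial>q) - c"
    using i1 by (simp add: prob_space)
  also have "\<dots> = t * ell q p v x + (1-t) * ell q p v y - c"
    using l_int by (simp add: ell_def)
  finally show "ell q p v (t *\<^sub>R x + (1 - t) *\<^sub>R y)
       \<le> t * ell q p v x + (1 - t) * ell q p v y - \<mu> / 2 * t * (1 - t) * (norm (x - y))\<^sup>2"
    unfolding c_def .
qed

lemma mixed_pointwise:
  fixes l :: "'v::real_inner \<Rightarrow> 't::real_inner \<Rightarrow> real" and gl :: "'v \<Rightarrow> 't \<Rightarrow> 'v \<times> 't"
  assumes d: "\<And>v \<theta>. ((\<lambda>z. l (fst z) (snd z)) has_derivative (\<lambda>h. inner (gl v \<theta>) h)) (at (v, \<theta>))"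
    and lip: "L-lipschitz_on UNIV (\<lambda>z. gl (fst z) (snd z))"
  shows "\<bar>l v1 b - l v2 b - l v1 a + l v2 a\<bar> \<le> L * norm (v1 - v2) * norm (b - a)"
proof -
  let ?d = "b - a"
  define \<phi> where "\<phi> s = l v1 (a + s *\<^sub>R ?d) - l v2 (a + s *\<^sub>R ?d)" for s
  have dl: "DERIV (\<lambda>s. l v (a + s *\<^sub>R ?d)) s :> inner (gl v (a + s *\<^sub>R ?d)) (0, ?d)" for v s
  proof -
    have g: "((\<lambda>s::real. (v, a + s *\<^sub>R ?d)) has_derivative (\<lambda>s. (0, s *\<^sub>R ?d))) (at s)"
      by (auto intro!: derivative_eq_intros)
    have "((\<lambda>s. l v (a + s *\<^sub>R ?d)) has_derivative (\<lambda>h. inner (gl v (a + s *\<^sub>R ?d)) (0, h *\<^sub>R ?d))) (at s)"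
      using has_derivative_compose[OF g d] by (simp add: o_def)
    then show ?thesis
      by (rule has_derivative_imp_has_field_derivative) (simp add: inner_Pair_0)
  qed
  have der: "DERIV \<phi> s :> inner (gl v1 (a + s *\<^sub>R ?d)) (0, ?d) - inner (gl v2 (a + s *\<^sub>R ?d)) (0, ?d)" for s
    unfolding \<phi>_def by (intro derivative_intros dl)
  obtain z where z: "0 < z" "z < 1" and eq: "\<phi> 1 - \<phi> 0 = (1 - 0) * (inner (gl v1 (a + z *\<^sub>R ?d)) (0, ?d) - inner (gl v2 (a + z *\<^sub>R ?d)) (0, ?d))"
    using MVT2[of 0 1 \<phi>, OF _ der] by auto
  let ?t = "a + z *\<^sub>R ?d"
  have "\<bar>inner (gl v1 ?t) (0, ?d) - inner (gl v2 ?t) (0, ?d)\<bar> = \<bar>inner (gl v1 ?t - gl v2 ?t) (0, ?d)\<bar>"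
    by (simp add: inner_diff_left)
  also have "\<dots> \<le> norm (gl v1 ?t - gl v2 ?t) * norm (0::'v, ?d)" by (rule Cauchy_Schwarz_ineq2)
  also have "\<dots> \<le> (L * norm (v1 - v2)) * norm ?d"
  proof (rule mult_mono)
    have "dist (gl (fst (v1, ?t)) (snd (v1, ?t))) (gl (fst (v2, ?t)) (snd (v2, ?t))) \<le> L * dist (v1, ?t) (v2, ?t)"
      using lip unfolding lipschitz_on_def by blast
    then show "norm (gl v1 ?t - gl v2 ?t) \<le> L * norm (v1 - v2)"
      by (simp add: dist_Pair_Pair dist_norm)
    show "norm (0::'v, ?d) \<le> norm ?d" by (simp add: norm_Pair)
    show "0 \<le> L * norm (v1 - v2)" using lip unfolding lipschitz_on_def by simp
  qed simp
  finally show ?thesis using eq unfolding \<phi>_def by (simp add: algebra_simps)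
qed

lemma mixed_ell:
  fixes p :: "'s \<Rightarrow> 'v::real_inner \<Rightarrow> 't::real_inner \<Rightarrow> real"
  assumes q: "prob_space q" and l_int: "\<And>v \<theta>. integrable q (lfun p v \<theta>)"
    and d: "\<And>\<xi> v \<theta>. \<xi> \<in> space q \<Longrightarrow>
        ((\<lambda>z. lfun p (fst z) (snd z) \<xi>) has_derivative (\<lambda>h. inner (gl \<xi> v \<theta>) h)) (at (v, \<theta>))"
    and lip: "\<And>\<xi>. \<xi> \<in> space q \<Longrightarrow> L-lipschitz_on UNIV (\<lambda>z. gl \<xi> (fst z) (snd z))"
  shows "\<bar>ell q p v1 b - ell q p v2 b - ell q p v1 a + ell q p v2 a\<bar> \<le> L * norm (v1 - v2) * norm (b - a)"
proof -
  interpret prob_space q by (rule q)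
  define c where "c = L * norm (v1 - v2) * norm (b - a)"
  define h where "h \<xi> = lfun p v1 b \<xi> - lfun p v2 b \<xi> - lfun p v1 a \<xi> + lfun p v2 a \<xi>" for \<xi>
  have hi: "integrable q h" unfolding h_def using l_int by auto
  have hb: "\<bar>h \<xi>\<bar> \<le> c" if "\<xi> \<in> space q" for \<xi>
    unfolding h_def c_def
    by (rule mixed_pointwise[of "\<lambda>v \<theta>. lfun p v \<theta> \<xi>" "gl \<xi>"]) (use d lip that in auto)
  have eq: "ell q p v1 b - ell q p v2 b - ell q p v1 a + ell q p v2 a = (\<integral>\<xi>. h \<xi> \<partial>q)"
    unfolding h_def ell_def using l_int by simp
  have "(\<integral>\<xi>. h \<xi> \<partial>q) \<le> (\<integral>\<xi>. c \<partial>q)"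
    by (rule integral_mono) (use hi hb in \<open>auto simp: abs_le_iff\<close>)
  moreover have "(\<integral>\<xi>. -c \<partial>q) \<le> (\<integral>\<xi>. h \<xi> \<partial>q)"
  proof (rule integral_mono)
    fix \<xi> assume "\<xi> \<in> space q"
    then have "\<bar>h \<xi>\<bar> \<le> c" by (rule hb)
    then show "- c \<le> h \<xi>" by linarith
  qed (use hi in auto)
  ultimately show ?thesis unfolding eq c_def[symmetric] by (simp add: prob_space abs_le_iff)
qed

lemma coercive_bound:
  fixes B :: "'a::real_inner \<Rightarrow> 'a"
  assumes pos: "\<And>k. inner (B k) k \<ge> \<mu> * (norm k)^2" and mu: "\<mu> > 0"
  shows "norm u \<le> norm (B u) / \<mu>"
proof -
  have "\<mu> * (norm u)^2 \<le> inner (B u) u" by (rule pos)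
  also have "\<dots> \<le> norm (B u) * norm u" by (rule norm_cauchy_schwarz)
  finally have a: "\<mu> * (norm u)^2 \<le> norm (B u) * norm u" .
  show ?thesis
  proof (cases "norm u = 0")
    case True then show ?thesis using mu by simp
  next
    case False
    then have "norm u > 0" by simp
    with a have "\<mu> * norm u \<le> norm (B u)" by (simp add: power2_eq_square)
    then show ?thesis using mu by (simp add: field_simps)
  qed
qed

lemma adjoint_diff:
  fixes A B :: "'a::euclidean_space \<Rightarrow>\<^sub>L 'b::euclidean_space"
  shows "adjoint (blinfun_apply A) y - adjoint (blinfun_apply B) y = adjoint (blinfun_apply (A - B)) y"
proof -
  have linA: "linear (blinfun_apply A)" for A :: "'a \<Rightarrow>\<^sub>L 'b"
    by (simp add: blinfun.bounded_linear_right bounded_linear.linear)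
  let ?u = "adjoint (blinfun_apply A) y - adjoint (blinfun_apply B) y - adjoint (blinfun_apply (A - B)) y"
  have "inner ?u ?u = inner ?u (adjoint (blinfun_apply A) y) - inner ?u (adjoint (blinfun_apply B) y) - inner ?u (adjoint (blinfun_apply (A - B)) y)"
    by (simp add: inner_diff_right)
  also have "\<dots> = inner (blinfun_apply A ?u) y - inner (blinfun_apply B ?u) y - inner (blinfun_apply (A - B) ?u) y"
    by (simp only: adjoint_works[OF linA])
  also have "\<dots> = 0" by (simp add: blinfun.diff_left inner_diff_left)
  finally show ?thesis by simp
qed

lemma lipN:
  fixes f :: "'a::real_normed_vector \<Rightarrow> 'b::real_normed_vector"
  assumes "C-lipschitz_on UNIV f"
  shows "norm (f x - f y) \<le> C * norm (x - y)"
  using assms unfolding lipschitz_on_def by (simp add: dist_norm)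

lemma step_alg:
  fixes \<alpha> G H P E F0 F1 :: real
  assumes a: "\<alpha> \<ge> 0" and d: "F1 \<le> F0 - \<alpha>*P + \<alpha>/8*H" and e: "E = G - 2*P + H" and p: "2*P \<le> G + H"
    and gh: "0 \<le> G" "0 \<le> H"
  shows "\<alpha>/4*G \<le> F0 - F1 + 3*\<alpha>/4*E"
proof -
  have m: "\<alpha>*(2*P) \<le> \<alpha>*(G + H)" using p a by (rule mult_left_mono)
  define X Y Z where "X = \<alpha>*G" and "Y = \<alpha>*P" and "Z = \<alpha>*H"
  have 1: "2*Y \<le> X + Z" using m unfolding X_def Y_def Z_def by (simp add: algebra_simps)
  have 2: "\<alpha>/4*G = X/4" "\<alpha>*P = Y" "\<alpha>/8*H = Z/8" unfolding X_def Y_def Z_def by simp_all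
  have 3: "3*\<alpha>/4*E = 3/4*X - 3/2*Y + 3/4*Z" unfolding X_def Y_def Z_def e by (simp add: field_simps)
  have d': "F1 \<le> F0 - Y + Z/8" using d unfolding 2(2) 2(3) .
  have "0 \<le> X" "0 \<le> Z" unfolding X_def Z_def using a gh by simp_all
  then show ?thesis unfolding 2(1) 3 using d' 1 by linarith
qed



theorem lemma6:
  fixes q :: "'s measure" and \<nu> :: "'s measure"
    and p :: "'s \<Rightarrow> 'v::euclidean_space \<Rightarrow> 't::euclidean_space \<Rightarrow> real"
    and R \<mu> L :: real
    and gl :: "'s \<Rightarrow> 'v \<Rightarrow> 't \<Rightarrow> 'v \<times> 't"
    and gell :: "'v \<Rightarrow> 't \<Rightarrow> 't"
    and Htv :: "'v \<Rightarrow> 't \<Rightarrow> ('v \<Rightarrow>\<^sub>L 't)" and Htt :: "'v \<Rightarrow> 't \<Rightarrow> ('t \<Rightarrow>\<^sub>L 't)"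
    and Llv Llt Lblv Lblt :: real
    and f :: "'v \<Rightarrow> 't \<Rightarrow> real" and fv :: "'v \<Rightarrow> 't \<Rightarrow> 'v" and ft :: "'v \<Rightarrow> 't \<Rightarrow> 't"
    and Lfv Lft Lbfv Lbft D1 :: real
    and vs :: "nat \<Rightarrow> 'v" and ghat :: "nat \<Rightarrow> 'v"
    and K :: nat
  defines "\<Phi> \<equiv> (\<lambda>v. f v (theta_star (ell q p) R v))"
    and "gradPhi \<equiv> hypergrad fv ft Htv Htt (theta_star (ell q p) R)"
    and "Lv \<equiv> Lv_const L \<mu> Lfv Lft Lbfv Lbft D1 Llv Llt Lblv Lblt"
  assumes R_pos: "R > 0"
    \<comment> \<open>setting: q a probability distribution; p(.;v,theta) probability densities w.r.t. a base measure nu\<close>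
    and q_prob: "prob_space q"
    and sets_nu: "sets \<nu> = sets q"
    and p_pos: "\<And>\<xi> v \<theta>. \<xi> \<in> space q \<Longrightarrow> p \<xi> v \<theta> > 0"
    and p_meas: "\<And>v \<theta>. (\<lambda>\<xi>. p \<xi> v \<theta>) \<in> borel_measurable \<nu>"
    and p_dens: "\<And>v \<theta>. (\<integral>\<^sup>+\<xi>. ennreal (p \<xi> v \<theta>) \<partial>\<nu>) = 1"
    and l_int: "\<And>v \<theta>. integrable q (lfun p v \<theta>)"
    \<comment> \<open>A1(i)\<close>
    and mu_pos: "\<mu> > 0" and L_pos: "L > 0"
    and A1_sc: "\<And>\<xi> v. \<xi> \<in> space q \<Longrightarrow> strongly_convex_on \<mu> UNIV (\<lambda>\<theta>. lfun p v \<theta> \<xi>)"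
    and A1_grad: "\<And>\<xi> v \<theta>. \<xi> \<in> space q \<Longrightarrow>
        ((\<lambda>z. lfun p (fst z) (snd z) \<xi>) has_derivative (\<lambda>h. inner (gl \<xi> v \<theta>) h)) (at (v, \<theta>))"
    and A1_C2: "\<And>\<xi>. \<xi> \<in> space q \<Longrightarrow> \<exists>H :: 'v \<times> 't \<Rightarrow> (('v \<times> 't) \<Rightarrow>\<^sub>L ('v \<times> 't)).
        continuous_on UNIV H \<and>
        (\<forall>z. ((\<lambda>w. gl \<xi> (fst w) (snd w)) has_derivative blinfun_apply (H z)) (at z))"
    and A1_lip: "\<And>\<xi>. \<xi> \<in> space q \<Longrightarrow> L-lipschitz_on UNIV (\<lambda>z. gl \<xi> (fst z) (snd z))"
    \<comment> \<open>A1(ii): second derivatives of ell (g_ell = grad_theta ell) and their Lipschitz continuity\<close>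
    and ell_grad: "\<And>v \<theta>. ((ell q p) v has_derivative (\<lambda>h. inner (gell v \<theta>) h)) (at \<theta>)"
    and Htv_deriv: "\<And>v \<theta>. ((\<lambda>v'. gell v' \<theta>) has_derivative blinfun_apply (Htv v \<theta>)) (at v)"
    and Htt_deriv: "\<And>v \<theta>. (gell v has_derivative blinfun_apply (Htt v \<theta>)) (at \<theta>)"
    and A1_Htv_th: "\<And>v. Llv-lipschitz_on UNIV (Htv v)"
    and A1_Htt_th: "\<And>v. Llt-lipschitz_on UNIV (Htt v)"
    and A1_Htv_v: "\<And>\<theta>. Lblv-lipschitz_on UNIV (\<lambda>v. Htv v \<theta>)"
    and A1_Htt_v: "\<And>\<theta>. Lblt-lipschitz_on UNIV (\<lambda>v. Htt v \<theta>)"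
    \<comment> \<open>f differentiable with partial gradients fv, ft\<close>
    and f_deriv: "\<And>v \<theta>. ((\<lambda>z. f (fst z) (snd z)) has_derivative
        (\<lambda>(h, k). inner (fv v \<theta>) h + inner (ft v \<theta>) k)) (at (v, \<theta>))"
    \<comment> \<open>A2\<close>
    and A2_fv_th: "\<And>v. Lfv-lipschitz_on UNIV (fv v)"
    and A2_ft_th: "\<And>v. Lft-lipschitz_on UNIV (ft v)"
    and A2_fv_v: "\<And>\<theta>. Lbfv-lipschitz_on UNIV (\<lambda>v. fv v \<theta>)"
    and A2_ft_v: "\<And>\<theta>. Lbft-lipschitz_on UNIV (\<lambda>v. ft v \<theta>)"
    and A2_bound: "\<And>v \<theta>. norm (ft v \<theta>) \<le> D1"
    \<comment> \<open>the stated hypergradient formula is the gradient of Phi\<close>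
    and Phi_grad: "\<And>v. (\<Phi> has_derivative (\<lambda>h. inner (gradPhi v) h)) (at v)"
    \<comment> \<open>Phi* = inf Phi > -infinity\<close>
    and Phi_bdd: "bdd_below (range \<Phi>)"
    \<comment> \<open>iteration\<close>
    and iter: "\<And>k. k \<ge> 1 \<Longrightarrow> vs (Suc k) = vs k - (1 / (4 * Lv)) *\<^sub>R ghat k"
    and K_ge: "K \<ge> 1"
  shows "1 / (16 * Lv) * (\<Sum>k = 1..K. (norm (gradPhi (vs k)))\<^sup>2)
         \<le> \<Phi> (vs 1) - Inf (range \<Phi>) + 3 / (16 * Lv) * (\<Sum>k = 1..K. (norm (gradPhi (vs k) - ghat k))\<^sup>2)"
proof -
  define E where "E = ell q p"
  define ts where "ts = theta_star E R"
  have scE: "strongly_convex_on \<mu> UNIV (E v)" for v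
    unfolding E_def by (rule ell_sc[OF q_prob l_int A1_sc])
  have gradE: "(E v has_derivative (\<lambda>h. inner (gell v \<theta>) h)) (at \<theta>)" for v \<theta>
    unfolding E_def by (rule ell_grad)
  have contE: "continuous_on UNIV (E v)" for v
  proof -
    have "isCont (E v) \<theta>" for \<theta> using gradE[of v \<theta>] has_derivative_continuous by blast
    then show ?thesis by (simp add: continuous_at_imp_continuous_on)
  qed
  have ts: "ts v \<in> cball 0 R \<and> (\<forall>\<theta>'\<in>cball 0 R. E v (ts v) \<le> E v \<theta>')" for v
  proof -
    have "compact (cball (0::'t) R)" "cball (0::'t) R \<noteq> {}" "continuous_on (cball 0 R) (E v)"
      using R_pos contE[of v] continuous_on_subset by auto
    then obtain a where a: "a \<in> cball 0 R" "\<forall>y\<in>cball 0 R. E v a \<le> E v y"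
      using continuous_attains_inf[of "cball (0::'t) R" "E v"] by blast
    have uniq: "b = a" if b: "b \<in> cball 0 R" "\<forall>y\<in>cball 0 R. E v b \<le> E v y" for b
    proof (rule ccontr)
      assume ne: "b \<noteq> a"
      have "E v b - E v a \<ge> \<mu>/2 * (norm (b - a))^2"
        by (rule qgrowth[OF scE convex_cball a(1)]) (use a b in auto)
      moreover have "E v b \<le> E v a" using that a by auto
      moreover have "\<mu>/2 * (norm (b - a))^2 > 0" using ne mu_pos by simp
      ultimately show False by linarith
    qed
    have "ts v = a" unfolding ts_def theta_star_def
    proof (rule the_equality)
      show "a \<in> cball 0 R \<and> (\<forall>\<theta>'\<in>cball 0 R. E v a \<le> E v \<theta>')" using a by blast
      fix b assume "b \<in> cball 0 R \<and> (\<forall>\<theta>'\<in>cball 0 R. E v b \<le> E v \<theta>')"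
      then show "b = a" using uniq by blast
    qed
    with a show ?thesis by simp
  qed
  have ts_lip: "norm (ts v1 - ts v2) \<le> L/\<mu> * norm (v1 - v2)" for v1 v2
  proof -
    define a b where "a = ts v1" and "b = ts v2"
    have q1: "E v1 b - E v1 a \<ge> \<mu>/2 * (norm (b - a))^2"
      by (rule qgrowth[OF scE convex_cball[of 0 R]]) (use ts[of v1] ts[of v2] in \<open>auto simp: a_def b_def\<close>)
    have q2: "E v2 a - E v2 b \<ge> \<mu>/2 * (norm (a - b))^2"
      by (rule qgrowth[OF scE convex_cball[of 0 R]]) (use ts[of v1] ts[of v2] in \<open>auto simp: a_def b_def\<close>)
    have m: "\<bar>E v1 b - E v2 b - E v1 a + E v2 a\<bar> \<le> L * norm (v1 - v2) * norm (b - a)"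
      unfolding E_def by (rule mixed_ell[OF q_prob l_int A1_grad A1_lip])
    have nc: "norm (a - b) = norm (b - a)" by (rule norm_minus_commute)
    have h: "\<mu> * (norm (b - a))^2 = \<mu>/2 * (norm (b - a))^2 + \<mu>/2 * (norm (b - a))^2" by simp
    have key: "\<mu> * (norm (b - a))^2 \<le> L * norm (v1 - v2) * norm (b - a)"
      using q1 q2[unfolded nc] abs_le_D1[OF m] h by linarith
    show ?thesis
    proof (cases "norm (b - a) = 0")
      case True
      then show ?thesis using L_pos mu_pos unfolding a_def b_def by (simp add: norm_minus_commute)
    next
      case False
      then have pos: "norm (b - a) > 0" by simp
      from key have "\<mu> * norm (b - a) \<le> L * norm (v1 - v2)"
        using pos by (simp add: power2_eq_square mult.assoc[symmetric])
      then have "norm (b - a) \<le> L/\<mu> * norm (v1 - v2)" using mu_pos by (simp add: field_simps)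
      then show ?thesis unfolding a_def b_def by (simp add: norm_minus_commute)
    qed
  qed
  have gell_lip: "norm (gell v1 \<theta> - gell v2 \<theta>) \<le> L * norm (v1 - v2)" for v1 v2 \<theta>
  proof -
    define k where "k = gell v1 \<theta> - gell v2 \<theta>"
    have lim: "((\<lambda>t. (1/t) *\<^sub>R (E v1 (\<theta> + t *\<^sub>R k) - E v1 \<theta>) - (1/t) *\<^sub>R (E v2 (\<theta> + t *\<^sub>R k) - E v2 \<theta>))
        \<longlongrightarrow> inner (gell v1 \<theta>) k - inner (gell v2 \<theta>) k) (at_right 0)"
      by (intro tendsto_diff dirderiv[OF gradE])
    have ev: "\<forall>\<^sub>F t in at_right 0. (1/t) *\<^sub>R (E v1 (\<theta> + t *\<^sub>R k) - E v1 \<theta>) - (1/t) *\<^sub>R (E v2 (\<theta> + t *\<^sub>R k) - E v2 \<theta>)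
        \<le> L * norm (v1 - v2) * norm k"
      using eventually_at_right_less[of "0::real"]
    proof (rule eventually_mono)
      fix t :: real assume t: "0 < t"
      have m: "\<bar>E v1 (\<theta> + t *\<^sub>R k) - E v2 (\<theta> + t *\<^sub>R k) - E v1 \<theta> + E v2 \<theta>\<bar> \<le> L * norm (v1 - v2) * norm ((\<theta> + t *\<^sub>R k) - \<theta>)"
        unfolding E_def by (rule mixed_ell[OF q_prob l_int A1_grad A1_lip])
      have "(1/t) *\<^sub>R (E v1 (\<theta> + t *\<^sub>R k) - E v1 \<theta>) - (1/t) *\<^sub>R (E v2 (\<theta> + t *\<^sub>R k) - E v2 \<theta>)
          = (E v1 (\<theta> + t *\<^sub>R k) - E v2 (\<theta> + t *\<^sub>R k) - E v1 \<theta> + E v2 \<theta>) / t"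
        using t by (simp add: field_simps)
      also have "\<dots> \<le> \<bar>E v1 (\<theta> + t *\<^sub>R k) - E v2 (\<theta> + t *\<^sub>R k) - E v1 \<theta> + E v2 \<theta>\<bar> / t"
        using t by (intro divide_right_mono) auto
      also have "\<dots> \<le> (L * norm (v1 - v2) * (t * norm k)) / t"
        using m t by (intro divide_right_mono) auto
      also have "\<dots> = L * norm (v1 - v2) * norm k" using t by simp
      finally show "(1/t) *\<^sub>R (E v1 (\<theta> + t *\<^sub>R k) - E v1 \<theta>) - (1/t) *\<^sub>R (E v2 (\<theta> + t *\<^sub>R k) - E v2 \<theta>)
        \<le> L * norm (v1 - v2) * norm k" .
    qed
    have "inner (gell v1 \<theta>) k - inner (gell v2 \<theta>) k \<le> L * norm (v1 - v2) * norm k"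
      by (rule tendsto_le[OF _ tendsto_const lim ev]) simp
    moreover have "inner (gell v1 \<theta>) k - inner (gell v2 \<theta>) k = (norm k)^2"
      by (simp add: k_def inner_diff_left[symmetric] power2_norm_eq_inner)
    ultimately have key: "(norm k)^2 \<le> L * norm (v1 - v2) * norm k" by simp
    show ?thesis
    proof (cases "norm k = 0")
      case True then show ?thesis using L_pos unfolding k_def by simp
    next
      case False
      then have "norm k > 0" by simp
      with key have "norm k \<le> L * norm (v1 - v2)" by (simp add: power2_eq_square)
      then show ?thesis unfolding k_def .
    qed
  qed
  have Htv_norm: "norm (Htv v \<theta>) \<le> L" for v \<theta>
  proof (rule norm_blinfun_bound)
    show "0 \<le> L" using L_pos by simp
    fix h
    have lip: "L-lipschitz_on UNIV (\<lambda>v'. gell v' \<theta>)"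
      by (rule lipschitz_onI) (use gell_lip L_pos in \<open>auto simp: dist_norm\<close>)
    show "norm (blinfun_apply (Htv v \<theta>) h) \<le> L * norm h" by (rule lip_deriv_bound[OF lip Htv_deriv])
  qed
  have Htt_pos: "inner (blinfun_apply (Htt v \<theta>) k) k \<ge> \<mu> * (norm k)^2" for v \<theta> k
  proof -
    have mono: "inner (gell v y - gell v \<theta>) (y - \<theta>) \<ge> \<mu> * (norm (y - \<theta>))^2" for y
      by (rule sc_grad_mono[OF scE gradE])
    show ?thesis by (rule hess_lower[OF Htt_deriv mono])
  qed
  have linB: "linear (blinfun_apply (Htt v \<theta>))" for v \<theta>
    by (simp add: blinfun.bounded_linear_right bounded_linear.linear)
  have Binv: "blinfun_apply (Htt v \<theta>) (inv (blinfun_apply (Htt v \<theta>)) w) = w" for v \<theta> w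
    by (rule coercive_inv(1)[OF linB Htt_pos mu_pos])
  have Binv_norm: "norm (inv (blinfun_apply (Htt v \<theta>)) w) \<le> norm w / \<mu>" for v \<theta> w
    by (rule coercive_inv(2)[OF linB Htt_pos mu_pos])
  have Bbound: "norm u \<le> norm (blinfun_apply (Htt v \<theta>) u) / \<mu>" for v \<theta> u
    by (rule coercive_bound[OF Htt_pos mu_pos])
  have nn: "0 \<le> Lfv" "0 \<le> Lft" "0 \<le> Lbfv" "0 \<le> Lbft" "0 \<le> Llv" "0 \<le> Llt" "0 \<le> Lblv" "0 \<le> Lblt"
    using A2_fv_th[of undefined] A2_ft_th[of undefined] A2_fv_v[of undefined] A2_ft_v[of undefined]
      A1_Htv_th[of undefined] A1_Htt_th[of undefined] A1_Htv_v[of undefined] A1_Htt_v[of undefined]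
    unfolding lipschitz_on_def by simp_all
  have D1nn: "0 \<le> D1"
  proof -
    have "norm (ft undefined undefined) \<le> D1" by (rule A2_bound)
    moreover have "0 \<le> norm (ft undefined undefined)" by (rule norm_ge_zero)
    ultimately show ?thesis by linarith
  qed
  have Lv_ge: "0 \<le> Lv"
    unfolding Lv_def Lv_const_def using nn D1nn L_pos mu_pos
    by (intro add_nonneg_nonneg mult_nonneg_nonneg divide_nonneg_pos) auto
  have gP: "gradPhi v = fv v (ts v) - adjoint (blinfun_apply (Htv v (ts v))) (inv (blinfun_apply (Htt v (ts v))) (ft v (ts v)))" for v
    unfolding gradPhi_def hypergrad_def ts_def E_def by simp
  have gP_lip: "norm (gradPhi v1 - gradPhi v2) \<le> Lv * norm (v1 - v2)" for v1 v2
  proof -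
    define a b where "a = ts v1" and "b = ts v2"
    define A1 A2 where "A1 = Htv v1 a" and "A2 = Htv v2 b"
    define B1 B2 where "B1 = Htt v1 a" and "B2 = Htt v2 b"
    define g1 g2 where "g1 = ft v1 a" and "g2 = ft v2 b"
    define w1 w2 where "w1 = inv (blinfun_apply B1) g1" and "w2 = inv (blinfun_apply B2) g2"
    define \<Delta> \<delta> where "\<Delta> = norm (v1 - v2)" and "\<delta> = norm (a - b)"
    have \<delta>: "\<delta> \<le> L/\<mu> * \<Delta>" unfolding \<delta>_def \<Delta>_def a_def b_def by (rule ts_lip)
    have dnn: "0 \<le> \<delta>" "0 \<le> \<Delta>" unfolding \<delta>_def \<Delta>_def by simp_all
    have pe: "0 \<le> Llt*\<delta> + Lblt*\<Delta>" "0 \<le> Llv*\<delta> + Lblv*\<Delta>" "0 \<le> Lft*\<delta> + Lbft*\<Delta>"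
      by (intro add_nonneg_nonneg mult_nonneg_nonneg; use nn dnn in simp)+
    have e1: "norm (fv v1 a - fv v2 b) \<le> Lfv*\<delta> + Lbfv*\<Delta>"
    proof -
      have "norm (fv v1 a - fv v2 b) \<le> norm (fv v1 a - fv v1 b) + norm (fv v1 b - fv v2 b)"
        by (rule norm_diff_triangle_le) (rule order_refl)+
      also have "\<dots> \<le> Lfv*\<delta> + Lbfv*\<Delta>" unfolding \<delta>_def \<Delta>_def
        by (intro add_mono lipN[OF A2_fv_th] lipN[OF A2_fv_v])
      finally show ?thesis .
    qed
    have eA: "norm (A1 - A2) \<le> Llv*\<delta> + Lblv*\<Delta>"
    proof -
      have "norm (A1 - A2) \<le> norm (Htv v1 a - Htv v1 b) + norm (Htv v1 b - Htv v2 b)"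
        unfolding A1_def A2_def by (rule norm_diff_triangle_le) (rule order_refl)+
      also have "\<dots> \<le> Llv*\<delta> + Lblv*\<Delta>" unfolding \<delta>_def \<Delta>_def
        by (intro add_mono lipN[OF A1_Htv_th] lipN[OF A1_Htv_v])
      finally show ?thesis .
    qed
    have eB: "norm (B2 - B1) \<le> Llt*\<delta> + Lblt*\<Delta>"
    proof -
      have "norm (B2 - B1) = norm (B1 - B2)" by (rule norm_minus_commute)
      also have "\<dots> \<le> norm (Htt v1 a - Htt v1 b) + norm (Htt v1 b - Htt v2 b)"
        unfolding B1_def B2_def by (rule norm_diff_triangle_le) (rule order_refl)+
      also have "\<dots> \<le> Llt*\<delta> + Lblt*\<Delta>" unfolding \<delta>_def \<Delta>_def
        by (intro add_mono lipN[OF A1_Htt_th] lipN[OF A1_Htt_v])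
      finally show ?thesis .
    qed
    have eg: "norm (g1 - g2) \<le> Lft*\<delta> + Lbft*\<Delta>"
    proof -
      have "norm (g1 - g2) \<le> norm (ft v1 a - ft v1 b) + norm (ft v1 b - ft v2 b)"
        unfolding g1_def g2_def by (rule norm_diff_triangle_le) (rule order_refl)+
      also have "\<dots> \<le> Lft*\<delta> + Lbft*\<Delta>" unfolding \<delta>_def \<Delta>_def
        by (intro add_mono lipN[OF A2_ft_th] lipN[OF A2_ft_v])
      finally show ?thesis .
    qed
    have nw: "norm (inv (blinfun_apply (Htt v \<theta>)) (ft v' \<theta>')) \<le> D1/\<mu>" for v \<theta> v' \<theta>'
    proof -
      have "norm (inv (blinfun_apply (Htt v \<theta>)) (ft v' \<theta>')) \<le> norm (ft v' \<theta>') / \<mu>" by (rule Binv_norm)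
      also have "\<dots> \<le> D1 / \<mu>" using A2_bound[of v' \<theta>'] mu_pos by (simp add: divide_right_mono)
      finally show ?thesis .
    qed
    have nw1: "norm w1 \<le> D1/\<mu>" unfolding w1_def B1_def g1_def by (rule nw)
    have nw2: "norm w2 \<le> D1/\<mu>" unfolding w2_def B2_def g2_def by (rule nw)
    have nA2: "norm A2 \<le> L" unfolding A2_def by (rule Htv_norm)
    define u1 u2 where "u1 = w1 - inv (blinfun_apply B1) g2" and "u2 = inv (blinfun_apply B1) g2 - w2"
    have Bu1: "blinfun_apply B1 u1 = g1 - g2"
      unfolding u1_def w1_def B1_def by (simp add: blinfun.diff_right Binv)
    have Bu2: "blinfun_apply B1 u2 = blinfun_apply (B2 - B1) w2"
    proof -
      have "blinfun_apply B1 u2 = g2 - blinfun_apply B1 w2"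
        unfolding u2_def B1_def by (simp add: blinfun.diff_right Binv)
      also have "g2 = blinfun_apply B2 w2" unfolding w2_def g2_def B2_def by (simp add: Binv)
      finally show ?thesis by (simp add: blinfun.diff_left)
    qed
    have nu1: "norm u1 \<le> (Lft*\<delta> + Lbft*\<Delta>)/\<mu>"
    proof -
      have "norm u1 \<le> norm (blinfun_apply B1 u1) / \<mu>" unfolding B1_def by (rule Bbound)
      also have "\<dots> \<le> (Lft*\<delta> + Lbft*\<Delta>)/\<mu>" unfolding Bu1 using eg mu_pos by (simp add: divide_right_mono)
      finally show ?thesis .
    qed
    have nu2: "norm u2 \<le> (Llt*\<delta> + Lblt*\<Delta>) * (D1/\<mu>) / \<mu>"
    proof -
      have "norm u2 \<le> norm (blinfun_apply B1 u2) / \<mu>" unfolding B1_def by (rule Bbound)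
      also have "\<dots> \<le> (norm (B2 - B1) * norm w2) / \<mu>" unfolding Bu2 using mu_pos
        by (intro divide_right_mono norm_blinfun) simp
      also have "\<dots> \<le> (Llt*\<delta> + Lblt*\<Delta>) * (D1/\<mu>) / \<mu>" using mu_pos eB nw2 pe
        by (intro divide_right_mono mult_mono) auto
      finally show ?thesis .
    qed
    have nw12: "norm (w1 - w2) \<le> (Lft*\<delta> + Lbft*\<Delta>)/\<mu> + (Llt*\<delta> + Lblt*\<Delta>) * (D1/\<mu>) / \<mu>"
    proof -
      have "w1 - w2 = u1 + u2" unfolding u1_def u2_def by simp
      then have "norm (w1 - w2) \<le> norm u1 + norm u2" by (simp add: norm_triangle_ineq)
      then show ?thesis using nu1 nu2 by linarith
    qed
    have linA2: "linear (adjoint (blinfun_apply A2))"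
      by (intro adjoint_linear) (simp add: blinfun.bounded_linear_right bounded_linear.linear)
    have adj: "adjoint (blinfun_apply A1) w1 - adjoint (blinfun_apply A2) w2
        = adjoint (blinfun_apply (A1 - A2)) w1 + adjoint (blinfun_apply A2) (w1 - w2)"
      using adjoint_diff[of A1 w1 A2] linear_diff[OF linA2, of w1 w2] by (simp add: algebra_simps)
    have n1: "norm (adjoint (blinfun_apply (A1 - A2)) w1) \<le> (Llv*\<delta> + Lblv*\<Delta>) * (D1/\<mu>)"
    proof -
      have "norm (adjoint (blinfun_apply (A1 - A2)) w1) \<le> norm (A1 - A2) * norm w1" by (rule adjoint_norm)
      also have "\<dots> \<le> (Llv*\<delta> + Lblv*\<Delta>) * (D1/\<mu>)" using eA nw1 pe by (intro mult_mono) auto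
      finally show ?thesis .
    qed
    have n2: "norm (adjoint (blinfun_apply A2) (w1 - w2)) \<le> L * ((Lft*\<delta> + Lbft*\<Delta>)/\<mu> + (Llt*\<delta> + Lblt*\<Delta>) * (D1/\<mu>) / \<mu>)"
    proof -
      have "norm (adjoint (blinfun_apply A2) (w1 - w2)) \<le> norm A2 * norm (w1 - w2)" by (rule adjoint_norm)
      also have "\<dots> \<le> L * ((Lft*\<delta> + Lbft*\<Delta>)/\<mu> + (Llt*\<delta> + Lblt*\<Delta>) * (D1/\<mu>) / \<mu>)"
        using nA2 nw12 L_pos by (intro mult_mono) auto
      finally show ?thesis .
    qed
    have "gradPhi v1 - gradPhi v2 = (fv v1 a - fv v2 b) - (adjoint (blinfun_apply A1) w1 - adjoint (blinfun_apply A2) w2)"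
      unfolding gP a_def b_def A1_def A2_def w1_def w2_def B1_def B2_def g1_def g2_def by simp
    also have "\<dots> = (fv v1 a - fv v2 b) - (adjoint (blinfun_apply (A1 - A2)) w1 + adjoint (blinfun_apply A2) (w1 - w2))"
      by (simp only: adj)
    finally have eqg: "gradPhi v1 - gradPhi v2 = (fv v1 a - fv v2 b) - (adjoint (blinfun_apply (A1 - A2)) w1 + adjoint (blinfun_apply A2) (w1 - w2))" .
    have tri: "norm (gradPhi v1 - gradPhi v2) \<le> norm (fv v1 a - fv v2 b) + norm (adjoint (blinfun_apply (A1 - A2)) w1) + norm (adjoint (blinfun_apply A2) (w1 - w2))"
    proof -
      have "norm (gradPhi v1 - gradPhi v2) \<le> norm (fv v1 a - fv v2 b) + norm (adjoint (blinfun_apply (A1 - A2)) w1 + adjoint (blinfun_apply A2) (w1 - w2))"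
        unfolding eqg by (rule norm_triangle_ineq4)
      moreover have "norm (adjoint (blinfun_apply (A1 - A2)) w1 + adjoint (blinfun_apply A2) (w1 - w2)) \<le> norm (adjoint (blinfun_apply (A1 - A2)) w1) + norm (adjoint (blinfun_apply A2) (w1 - w2))"
        by (rule norm_triangle_ineq)
      ultimately show ?thesis by linarith
    qed
    define c0 c1 where "c0 = Lbfv + Lblv*D1/\<mu> + L*Lbft/\<mu> + L*Lblt*D1/\<mu>^2"
      and "c1 = Lfv + Llv*D1/\<mu> + L*Lft/\<mu> + L*Llt*D1/\<mu>^2"
    have tot: "norm (gradPhi v1 - gradPhi v2) \<le> c0 * \<Delta> + c1 * \<delta>"
    proof -
      have "Lfv*\<delta> + Lbfv*\<Delta> + (Llv*\<delta> + Lblv*\<Delta>) * (D1/\<mu>) + L * ((Lft*\<delta> + Lbft*\<Delta>)/\<mu> + (Llt*\<delta> + Lblt*\<Delta>) * (D1/\<mu>) / \<mu>)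
          = c0 * \<Delta> + c1 * \<delta>"
        unfolding c0_def c1_def using mu_pos by (simp add: field_simps power2_eq_square)
      then show ?thesis using tri e1 n1 n2 by linarith
    qed
    have c1nn: "0 \<le> c1" unfolding c1_def using nn D1nn L_pos mu_pos
      by (intro add_nonneg_nonneg mult_nonneg_nonneg divide_nonneg_pos) auto
    have "c1 * \<delta> \<le> c1 * (L/\<mu> * \<Delta>)" using c1nn \<delta> by (rule mult_left_mono[rotated])
    moreover have "c0 * \<Delta> + c1 * (L/\<mu> * \<Delta>) = Lv * \<Delta>"
      unfolding c0_def c1_def Lv_def Lv_const_def using mu_pos
      by (simp add: field_simps power2_eq_square power3_eq_cube)
    ultimately show ?thesis using tot unfolding \<Delta>_def by linarith
  qed
  have Lip: "Lv-lipschitz_on UNIV gradPhi"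
    by (rule lipschitz_onI) (use gP_lip Lv_ge in \<open>auto simp: dist_norm\<close>)
  have desc: "\<Phi> y \<le> \<Phi> x + inner (gradPhi x) (y - x) + Lv/2 * (norm (y - x))^2" for x y
    by (rule descent[OF Phi_grad Lip])
  have infle: "Inf (range \<Phi>) \<le> \<Phi> x" for x by (rule cInf_lower[OF rangeI Phi_bdd])
  show ?thesis
  proof (cases "Lv = 0")
    case True
    then show ?thesis using infle[of "vs 1"] by simp
  next
    case False
    then have Lvp: "Lv > 0" using Lv_ge by simp
    define \<alpha> where "\<alpha> = 1/(4*Lv)"
    have ap: "\<alpha> \<ge> 0" unfolding \<alpha>_def using Lvp by simp
    have c16: "1/(16*Lv) = \<alpha>/4" "3/(16*Lv) = 3*\<alpha>/4" "Lv/2 * \<alpha>^2 = \<alpha>/8"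
      unfolding \<alpha>_def using Lvp by (simp_all add: field_simps power2_eq_square)
    have step: "1/(16*Lv) * (norm (gradPhi (vs k)))^2 \<le> \<Phi> (vs k) - \<Phi> (vs (Suc k)) + 3/(16*Lv) * (norm (gradPhi (vs k) - ghat k))^2"
      if k: "k \<ge> 1" for k
    proof -
      define g h where "g = gradPhi (vs k)" and "h = ghat k"
      have vs: "vs (Suc k) - vs k = - (\<alpha> *\<^sub>R h)" using iter[OF k] unfolding \<alpha>_def h_def by simp
      have d: "\<Phi> (vs (Suc k)) \<le> \<Phi> (vs k) + inner g (- (\<alpha> *\<^sub>R h)) + Lv/2 * (norm (- (\<alpha> *\<^sub>R h)))^2"
        using desc[of "vs (Suc k)" "vs k"] unfolding vs g_def by simp
      have i1: "inner g (- (\<alpha> *\<^sub>R h)) = - (\<alpha> * inner g h)" by simp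
      have i2: "Lv/2 * (norm (- (\<alpha> *\<^sub>R h)))^2 = \<alpha>/8 * (norm h)^2"
        using c16(3) ap by (simp add: power_mult_distrib)
      have d': "\<Phi> (vs (Suc k)) \<le> \<Phi> (vs k) - \<alpha> * inner g h + \<alpha>/8 * (norm h)^2"
        using d i1 i2 by linarith
      have e: "(norm (g - h))^2 = (norm g)^2 - 2 * inner g h + (norm h)^2"
        by (simp add: power2_norm_eq_inner inner_diff_left inner_diff_right inner_commute)
      have pb: "2 * inner g h \<le> (norm g)^2 + (norm h)^2"
        using e zero_le_power2[of "norm (g - h)"] by linarith
      have "\<alpha>/4 * (norm g)^2 \<le> \<Phi> (vs k) - \<Phi> (vs (Suc k)) + 3*\<alpha>/4 * (norm (g - h))^2"
        by (rule step_alg[OF ap d' e pb]) simp_all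
      then show ?thesis unfolding c16 g_def h_def .
    qed
    have "1/(16*Lv) * (\<Sum>k = 1..K. (norm (gradPhi (vs k)))\<^sup>2) = (\<Sum>k = 1..K. 1/(16*Lv) * (norm (gradPhi (vs k)))\<^sup>2)"
      by (simp add: sum_distrib_left)
    also have "\<dots> \<le> (\<Sum>k = 1..K. (\<Phi> (vs k) - \<Phi> (vs (Suc k))) + 3/(16*Lv) * (norm (gradPhi (vs k) - ghat k))^2)"
      by (rule sum_mono) (use step in auto)
    also have "\<dots> = (\<Sum>k = 1..K. \<Phi> (vs k)) - (\<Sum>k = 1..K. \<Phi> (vs (Suc k))) + 3/(16*Lv) * (\<Sum>k = 1..K. (norm (gradPhi (vs k) - ghat k))^2)"
      by (simp add: sum.distrib sum_subtractf sum_distrib_left)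
    also have "(\<Sum>k = 1..K. \<Phi> (vs k)) - (\<Sum>k = 1..K. \<Phi> (vs (Suc k))) = \<Phi> (vs 1) - \<Phi> (vs (Suc K))"
    proof -
      have "(\<Sum>k = 1..K. \<Phi> (vs (Suc k)) - \<Phi> (vs k)) = \<Phi> (vs (Suc K)) - \<Phi> (vs 1)"
        using sum_Suc_diff[of 1 K "\<lambda>i. \<Phi> (vs i)"] K_ge by simp
      then show ?thesis by (simp add: sum_subtractf)
    qed
    finally show ?thesis using infle[of "vs (Suc K)"] by linarith
  qed
qed

end
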